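(* Let $\delta\in(0,1)$ and let $f:G_\delta\to\mathbb{C}$ be a function. Suppose there are a Hilbert space $\mathcal{M}$, a unitary operator $U$ on $\mathcal{M}$ and a map $u:G_\delta\to\mathcal{M}$ (not assumed holomorphic) such that for all $\lambda,\mu\in G_\delta$, $$1-\overline{f(\mu)}f(\lambda)=\langle(1-\mu_U^*\lambda_U)u(\lambda),u(\mu)\rangle_{\mathcal{M}}.$$ Then $u$ is holomorphic on $G_\delta$.
   Context: $G_\delta=\{x+iy: x,y\in\mathbb{R},\ \frac{x^2}{(1+\delta)^2}+\frac{y^2}{(1-\delta)^2}<1\}$. For $\lambda\in G_\delta$ and a unitary $U$ on $\mathcal{M}$, $\lambda_U=(\delta U^*-\tfrac12\lambda)(1-\tfrac12\lambda U^* )^{-1}$. *)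

theory Defs
  imports "HOL-Analysis.Analysis"
begin

text \<open>A complex Hilbert space
  is a type of class complex_inner that is also a complete_space.\<close>

class complex_inner = real_normed_vector +
  fixes scaleC :: "complex \<Rightarrow> 'a \<Rightarrow> 'a"
    and cinner :: "'a \<Rightarrow> 'a \<Rightarrow> complex"
  assumes scaleC_add_right: "scaleC a (x + y) = scaleC a x + scaleC a y"
    and scaleC_add_left: "scaleC (a + b) x = scaleC a x + scaleC b x"
    and scaleC_scaleC: "scaleC a (scaleC b x) = scaleC (a * b) x"
    and scaleC_one: "scaleC 1 x = x"
    and scaleC_of_real: "scaleC (complex_of_real r) x = scaleR r x"
    and cinner_add_left: "cinner (x + y) z = cinner x z + cinner y z"
    and cinner_scaleC_left: "cinner (scaleC a x) y = a * cinner x y"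
    and cinner_commute: "cinner y x = cnj (cinner x y)"
    and cinner_self_norm: "cinner x x = complex_of_real ((norm x)\<^sup>2)"

definition unitary_op :: "('a::complex_inner \<Rightarrow> 'a) \<Rightarrow> bool" where
  "unitary_op U \<longleftrightarrow>
     (\<forall>x y. U (x + y) = U x + U y) \<and> (\<forall>a x. U (scaleC a x) = scaleC a (U x)) \<and>
     bij U \<and> (\<forall>x y. cinner (U x) (U y) = cinner x y)"

definition G :: "real \<Rightarrow> complex set" where
  "G \<delta> = {z. (Re z)\<^sup>2 / (1 + \<delta>)\<^sup>2 + (Im z)\<^sup>2 / (1 - \<delta>)\<^sup>2 < 1}"

text \<open>lambda_U = (delta U^* - lambda/2)(1 - lambda/2 U^*)^{-1}, with U^* = U^{-1} for unitary U.\<close>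
definition lamU :: "real \<Rightarrow> ('a::complex_inner \<Rightarrow> 'a) \<Rightarrow> complex \<Rightarrow> 'a \<Rightarrow> 'a" where
  "lamU \<delta> U l v =
     (let Ustar = inv U;
          w = inv (\<lambda>y. y - scaleC (l / 2) (Ustar y)) v
      in scaleC (complex_of_real \<delta>) (Ustar w) - scaleC (l / 2) w)"

definition holomorphic_vec :: "(complex \<Rightarrow> 'a::complex_inner) \<Rightarrow> complex set \<Rightarrow> bool" where
  "holomorphic_vec u S \<longleftrightarrow> (\<forall>z\<in>S. \<exists>v. (u has_derivative (\<lambda>h. scaleC h v)) (at z))"

end

theory Submission
  imports Defs
begin
lemma cvs_ax: "vector_space (scaleC :: complex \<Rightarrow> 'a::complex_inner \<Rightarrow> 'a)"
  by unfold_locales (simp_all add: scaleC_add_right scaleC_add_left scaleC_scaleC scaleC_one)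
interpretation cvs: vector_space "scaleC :: complex \<Rightarrow> 'a::complex_inner \<Rightarrow> 'a"
  by (rule cvs_ax)

lemmas sC_simps = cvs.scale_right_diff_distrib cvs.scale_left_diff_distrib
  cvs.scale_zero_left cvs.scale_zero_right cvs.scale_minus_left cvs.scale_minus_right
  scaleC_add_right scaleC_add_left scaleC_scaleC scaleC_one

lemma cinner_add_right: "cinner x (y + z) = cinner x y + cinner (x::'a::complex_inner) z"
  by (metis cinner_add_left cinner_commute complex_cnj_add)
lemma cinner_scaleC_right: "cinner x (scaleC a y) = cnj a * cinner (x::'a::complex_inner) y"
  by (metis cinner_scaleC_left cinner_commute complex_cnj_mult)
lemma cinner_zero_left[simp]: "cinner 0 (x::'a::complex_inner) = 0"
  by (metis add_cancel_left_right cinner_add_left)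
lemma cinner_zero_right[simp]: "cinner (x::'a::complex_inner) 0 = 0"
  by (metis cinner_commute cinner_zero_left complex_cnj_zero)
lemma cinner_minus_left: "cinner (- x) (y::'a::complex_inner) = - cinner x y"
  by (metis add.right_inverse add_eq_0_iff cinner_add_left cinner_zero_left)
lemma cinner_minus_right: "cinner y (- x::'a::complex_inner) = - cinner y x"
  by (metis cinner_commute cinner_minus_left complex_cnj_minus)
lemma cinner_diff_left: "cinner (x - y) (z::'a::complex_inner) = cinner x z - cinner y z"
  by (simp only: diff_conv_add_uminus cinner_add_left cinner_minus_left)
lemma cinner_diff_right: "cinner z (x - y::'a::complex_inner) = cinner z x - cinner z y"
  by (simp only: diff_conv_add_uminus cinner_add_right cinner_minus_right)
lemmas cinner_simps = cinner_add_left cinner_add_right cinner_scaleC_left cinner_scaleC_right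
  cinner_diff_left cinner_diff_right cinner_minus_left cinner_minus_right

lemma cinner_self_Re: "Re (cinner x (x::'a::complex_inner)) = (norm x)^2"
  by (simp add: cinner_self_norm)

lemma norm_scaleC: "norm (scaleC a (x::'a::complex_inner)) = cmod a * norm x"
proof -
  have "cinner (scaleC a x) (scaleC a x) = a * cnj a * cinner x x"
    by (simp add: cinner_simps)
  hence "complex_of_real ((norm (scaleC a x))^2) = a * cnj a * complex_of_real ((norm x)^2)"
    by (simp only: cinner_self_norm)
  also have "a * cnj a = complex_of_real ((cmod a)^2)" by (metis complex_norm_square of_real_power)
  finally have "(norm (scaleC a x))^2 = (cmod a * norm x)^2"
    by (metis of_real_eq_iff of_real_mult power_mult_distrib)
  thus ?thesis by (simp add: power2_eq_iff_nonneg)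
qed


lemma norm_add_sq: "(norm (x + y))^2 = (norm x)^2 + (norm y)^2 + 2 * Re (cinner x (y::'a::complex_inner))"
proof -
  have "(norm (x + y))^2 = Re (cinner (x+y) (x+y))" by (simp add: cinner_self_Re)
  also have "\<dots> = Re (cinner x x) + Re (cinner y y) + Re (cinner x y) + Re (cinner y x)"
    by (simp add: cinner_simps)
  also have "Re (cinner y x) = Re (cinner x y)" by (subst cinner_commute) simp
  finally show ?thesis by (simp add: cinner_self_Re)
qed

lemma norm_diff_sq: "(norm (x - y))^2 = (norm x)^2 + (norm y)^2 - 2 * Re (cinner x (y::'a::complex_inner))"
  using norm_add_sq[of x "- y"] by (simp add: cinner_minus_right)

lemma Re_CS: "Re (cinner x y) \<le> norm x * norm (y::'a::complex_inner)"
proof (cases "y = 0")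
  case True thus ?thesis by simp
next
  case False
  define t where "t = Re (cinner x y) / (norm y)^2"
  have ny: "norm y > 0" using False by simp
  have "0 \<le> (norm (x - scaleC (complex_of_real t) y))^2" by simp
  also have "\<dots> = (norm x)^2 + t^2 * (norm y)^2 - 2 * t * Re (cinner x y)"
    by (simp add: norm_diff_sq norm_scaleC cinner_simps power_mult_distrib)
  also have "\<dots> = (norm x)^2 - (Re (cinner x y))^2 / (norm y)^2"
    using ny by (simp add: t_def field_simps power2_eq_square)
  finally have "(Re (cinner x y))^2 \<le> (norm x * norm y)^2"
    using ny by (simp add: field_simps power_mult_distrib)
  thus ?thesis
    by (simp add: abs_le_square_iff[symmetric])
qed

lemma CS: "cmod (cinner x y) \<le> norm x * norm (y::'a::complex_inner)"
proof (cases "cinner x y = 0")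
  case True thus ?thesis by simp
next
  case False
  define p where "p = cinner x y"
  define e where "e = cnj p / cmod p"
  have ce: "cmod e = 1" using False by (simp add: e_def norm_divide p_def)
  have "cnj p * p = complex_of_real ((cmod p)^2)"
    by (metis complex_norm_square of_real_power mult.commute)
  hence "cinner (scaleC e x) y = complex_of_real (cmod p)"
    using False by (simp add: cinner_simps e_def p_def[symmetric] power2_eq_square field_simps)
  hence "cmod p = Re (cinner (scaleC e x) y)" by simp
  also have "\<dots> \<le> norm x * norm y" using Re_CS[of "scaleC e x" y] by (simp add: norm_scaleC ce)
  finally show ?thesis by (simp add: p_def)
qed

definition isolin :: "('a::complex_inner \<Rightarrow> 'a) \<Rightarrow> bool" where
  "isolin V \<longleftrightarrow> (\<forall>x y. V (x + y) = V x + V y) \<and> (\<forall>a x. V (scaleC a x) = scaleC a (V x)) \<and>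
     (\<forall>x y. cinner (V x) (V y) = cinner x y)"

lemma isolin_add: "isolin V \<Longrightarrow> V (x + y) = V x + V y" by (simp add: isolin_def)
lemma isolin_scaleC: "isolin V \<Longrightarrow> V (scaleC a x) = scaleC a (V x)" by (simp add: isolin_def)
lemma isolin_cinner: "isolin V \<Longrightarrow> cinner (V x) (V y) = cinner x y" by (simp add: isolin_def)
lemma isolin_diff: "isolin V \<Longrightarrow> V (x - y) = V x - V y"
  by (metis isolin_add add_diff_cancel diff_add_cancel)
lemma isolin_zero: "isolin V \<Longrightarrow> V 0 = 0"
  by (metis isolin_diff diff_self)
lemma isolin_norm: "isolin V \<Longrightarrow> norm (V x) = norm x"
proof -
  assume "isolin V"
  hence "cinner (V x) (V x) = cinner x x" by (simp add: isolin_cinner)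
  hence "complex_of_real ((norm (V x))^2) = complex_of_real ((norm x)^2)"
    by (simp only: cinner_self_norm)
  hence "(norm (V x))^2 = (norm x)^2" using of_real_eq_iff by blast
  thus ?thesis by (simp add: power2_eq_iff_nonneg)
qed

lemma unitary_isolin: assumes "unitary_op U" shows "isolin (inv U)"
proof -
  have add: "\<And>x y. U (x + y) = U x + U y" and sc: "\<And>a x. U (scaleC a x) = scaleC a (U x)"
    and b: "bij U" and ci: "\<And>x y. cinner (U x) (U y) = cinner x y"
    using assms by (auto simp: unitary_op_def)
  have UV: "\<And>x. U (inv U x) = x" using b by (simp add: bij_is_surj surj_f_inv_f)
  have VU: "\<And>x. inv U (U x) = x" using b by (simp add: bij_is_inj)
  show ?thesis unfolding isolin_def
  proof (intro conjI allI)
    fix x y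
    show "inv U (x + y) = inv U x + inv U y"
      by (metis VU UV add)
    show "cinner (inv U x) (inv U y) = cinner x y" by (metis UV ci)
  next
    fix a x show "inv U (scaleC a x) = scaleC a (inv U x)" by (metis VU UV sc)
  qed
qed

lemma L_bij:
  fixes V :: "'a::{complex_inner,complete_space} \<Rightarrow> 'a"
  assumes V: "isolin V" and a: "cmod a < 1"
  shows "bij (\<lambda>y. y - scaleC a (V y))"
proof (rule bijI)
  show "inj (\<lambda>y. y - scaleC a (V y))"
  proof (rule injI)
    fix x y assume "x - scaleC a (V x) = y - scaleC a (V y)"
    hence "x - y = scaleC a (V (x - y))"
      using V by (simp add: isolin_diff sC_simps algebra_simps)
    hence "norm (x - y) = cmod a * norm (x - y)"
      by (metis V isolin_norm norm_scaleC)
    hence "norm (x - y) = 0" using a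
      by (metis mult_cancel_right1 less_irrefl)
    thus "x = y" by simp
  qed
  show "surj (\<lambda>y. y - scaleC a (V y))"
  proof (rule surjI)
    fix v
    have "\<exists>!y. v + scaleC a (V y) = y"
    proof (rule banach_fix_type)
      show "0 \<le> cmod a" by simp
      show "cmod a < 1" by (rule a)
      show "\<forall>x y. dist (v + scaleC a (V x)) (v + scaleC a (V y)) \<le> cmod a * dist x y"
        using V by (simp add: dist_norm sC_simps[symmetric] isolin_diff[symmetric] norm_scaleC isolin_norm
              cvs.scale_right_diff_distrib[symmetric])
    qed
    then obtain y where "v + scaleC a (V y) = y" by blast
    hence "y - scaleC a (V y) = v" by (metis add_diff_cancel)
    thus "(SOME y. y - scaleC a (V y) = v) - scaleC a (V (SOME y. y - scaleC a (V y) = v)) = v"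
      by (rule someI)
  qed
qed

definition lin3 :: "'a::complex_inner \<Rightarrow> 'a \<Rightarrow> 'a \<Rightarrow> complex \<Rightarrow> complex \<Rightarrow> complex \<Rightarrow> 'a" where
  "lin3 x y z a b c = scaleC a x + scaleC b y + scaleC c z"

lemma lin3_add: "lin3 x y z a b c + lin3 x y z a' b' c' = lin3 x y z (a+a') (b+b') (c+c')"
  by (simp add: lin3_def sC_simps algebra_simps)
lemma lin3_diff: "lin3 x y z a b c - lin3 x y z a' b' c' = lin3 x y z (a-a') (b-b') (c-c')"
  by (simp add: lin3_def sC_simps algebra_simps)
lemma lin3_scale: "scaleC k (lin3 x y z a b c) = lin3 x y z (k*a) (k*b) (k*c)"
  by (simp add: lin3_def sC_simps algebra_simps)
lemma lin3_V: "isolin V \<Longrightarrow> V (lin3 x y z a b c) = lin3 (V x) (V y) (V z) a b c"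
  by (simp add: lin3_def isolin_add isolin_scaleC)
lemma lin3_atoms_diff: "lin3 (x - x') (y - y') (z - z') a b c = lin3 x y z a b c - lin3 x' y' z' a b c"
  by (simp add: lin3_def sC_simps algebra_simps)
lemma lin3_atoms_scale: "lin3 (scaleC p x) (scaleC q y) (scaleC r z) a b c = lin3 x y z (a*p) (b*q) (c*r)"
  by (simp add: lin3_def sC_simps)

lemma gram3:
  fixes X1 X2 X3 Y1 Y2 Y3 :: "'a::complex_inner"
  assumes h11: "1 - cnj F1 * F1 = cinner X1 X1 - cinner Y1 Y1"
    and h12: "1 - cnj F2 * F1 = cinner X1 X2 - cinner Y1 Y2"
    and h13: "1 - cnj F3 * F1 = cinner X1 X3 - cinner Y1 Y3"
    and h21: "1 - cnj F1 * F2 = cinner X2 X1 - cinner Y2 Y1"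
    and h22: "1 - cnj F2 * F2 = cinner X2 X2 - cinner Y2 Y2"
    and h23: "1 - cnj F3 * F2 = cinner X2 X3 - cinner Y2 Y3"
    and h31: "1 - cnj F1 * F3 = cinner X3 X1 - cinner Y3 Y1"
    and h32: "1 - cnj F2 * F3 = cinner X3 X2 - cinner Y3 Y2"
    and h33: "1 - cnj F3 * F3 = cinner X3 X3 - cinner Y3 Y3"
    and c: "c1 + c2 + c3 = 0"
  shows "cinner (lin3 X1 X2 X3 c1 c2 c3) (lin3 X1 X2 X3 c1 c2 c3)
       - cinner (lin3 Y1 Y2 Y3 c1 c2 c3) (lin3 Y1 Y2 Y3 c1 c2 c3)
       = - ((c1*F1 + c2*F2 + c3*F3) * cnj (c1*F1 + c2*F2 + c3*F3))"
proof -
  have c3: "c3 = - c1 - c2" using c by algebra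
  have e: "cinner X1 X1 = 1 - cnj F1 * F1 + cinner Y1 Y1" "cinner X1 X2 = 1 - cnj F2 * F1 + cinner Y1 Y2"
    "cinner X1 X3 = 1 - cnj F3 * F1 + cinner Y1 Y3" "cinner X2 X1 = 1 - cnj F1 * F2 + cinner Y2 Y1"
    "cinner X2 X2 = 1 - cnj F2 * F2 + cinner Y2 Y2" "cinner X2 X3 = 1 - cnj F3 * F2 + cinner Y2 Y3"
    "cinner X3 X1 = 1 - cnj F1 * F3 + cinner Y3 Y1" "cinner X3 X2 = 1 - cnj F2 * F3 + cinner Y3 Y2"
    "cinner X3 X3 = 1 - cnj F3 * F3 + cinner Y3 Y3"
    using assms by (simp_all add: algebra_simps)
  show ?thesis
    unfolding lin3_def cinner_simps e c3
    by (simp add: algebra_simps)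
qed

lemma Re_neg_mult_cnj: "Re (- (z * cnj z)) \<le> 0"
  by (simp add: complex_mult_cnj del: complex_cnj_add complex_cnj_mult)

lemma gramw:
  fixes w1 w2 w3 :: "'a::complex_inner" and d :: real
  assumes V: "isolin V"
  defines "X \<equiv> \<lambda>l w. w - scaleC (l/2) (V w)"
    and "Y \<equiv> \<lambda>l w. scaleC (complex_of_real d) (V w) - scaleC (l/2) w"
  assumes h11: "1 - cnj F1 * F1 = cinner (X l1 w1) (X l1 w1) - cinner (Y l1 w1) (Y l1 w1)"
    and h12: "1 - cnj F2 * F1 = cinner (X l1 w1) (X l2 w2) - cinner (Y l1 w1) (Y l2 w2)"
    and h13: "1 - cnj F3 * F1 = cinner (X l1 w1) (X l3 w3) - cinner (Y l1 w1) (Y l3 w3)"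
    and h21: "1 - cnj F1 * F2 = cinner (X l2 w2) (X l1 w1) - cinner (Y l2 w2) (Y l1 w1)"
    and h22: "1 - cnj F2 * F2 = cinner (X l2 w2) (X l2 w2) - cinner (Y l2 w2) (Y l2 w2)"
    and h23: "1 - cnj F3 * F2 = cinner (X l2 w2) (X l3 w3) - cinner (Y l2 w2) (Y l3 w3)"
    and h31: "1 - cnj F1 * F3 = cinner (X l3 w3) (X l1 w1) - cinner (Y l3 w3) (Y l1 w1)"
    and h32: "1 - cnj F2 * F3 = cinner (X l3 w3) (X l2 w2) - cinner (Y l3 w3) (Y l2 w2)"
    and h33: "1 - cnj F3 * F3 = cinner (X l3 w3) (X l3 w3) - cinner (Y l3 w3) (Y l3 w3)"
    and c: "c1 + c2 + c3 = 0"
    and d: "0 \<le> d"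
  shows "(1 - d^2) * (norm (lin3 w1 w2 w3 c1 c2 c3))^2 \<le>
     2 * Re (cinner (lin3 w1 w2 w3 c1 c2 c3) (V (lin3 w1 w2 w3 (c1*(l1/2)) (c2*(l2/2)) (c3*(l3/2)))))
     - 2 * d * Re (cinner (V (lin3 w1 w2 w3 c1 c2 c3)) (lin3 w1 w2 w3 (c1*(l1/2)) (c2*(l2/2)) (c3*(l3/2))))"
proof -
  define A where "A = lin3 w1 w2 w3 c1 c2 c3"
  define B where "B = lin3 w1 w2 w3 (c1*(l1/2)) (c2*(l2/2)) (c3*(l3/2))"
  have gx: "lin3 (X l1 w1) (X l2 w2) (X l3 w3) c1 c2 c3 = A - V B"
    unfolding X_def A_def B_def lin3_atoms_diff lin3_atoms_scale lin3_V[OF V] by simp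
  have gy: "lin3 (Y l1 w1) (Y l2 w2) (Y l3 w3) c1 c2 c3 = scaleC (complex_of_real d) (V A) - B"
    unfolding Y_def A_def B_def lin3_atoms_diff lin3_atoms_scale lin3_V[OF V] lin3_scale
    by (simp add: mult.commute)
  have g: "cinner (A - V B) (A - V B) - cinner (scaleC (complex_of_real d) (V A) - B) (scaleC (complex_of_real d) (V A) - B)
      = - ((c1*F1 + c2*F2 + c3*F3) * cnj (c1*F1 + c2*F2 + c3*F3))"
    unfolding gx[symmetric] gy[symmetric] by (rule gram3[OF h11 h12 h13 h21 h22 h23 h31 h32 h33 c])
  have "Re (cinner (A - V B) (A - V B) - cinner (scaleC (complex_of_real d) (V A) - B) (scaleC (complex_of_real d) (V A) - B)) \<le> 0"
    unfolding g by (rule Re_neg_mult_cnj)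
  hence "(norm (A - V B))^2 - (norm (scaleC (complex_of_real d) (V A) - B))^2 \<le> 0"
    by (simp add: cinner_self_Re)
  hence "(norm A)^2 + (norm B)^2 - 2 * Re (cinner A (V B))
      - (d^2 * (norm A)^2 + (norm B)^2 - 2 * d * Re (cinner (V A) B)) \<le> 0"
    unfolding norm_diff_sq using V d
    by (simp add: norm_scaleC isolin_norm cinner_simps power_mult_distrib)
  thus ?thesis unfolding A_def[symmetric] B_def[symmetric] by (simp add: algebra_simps)
qed

lemma real_CS2: "a*b + c*e \<le> sqrt (a^2 + c^2) * sqrt (b^2 + (e::real)^2)"
proof -
  have "(a*b + c*e)^2 \<le> (a^2 + c^2) * (b^2 + e^2)"
  proof -
    have "0 \<le> (a*e - c*b)^2" by simp
    thus ?thesis by (simp add: power2_eq_square algebra_simps)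
  qed
  hence "sqrt ((a*b + c*e)^2) \<le> sqrt ((a^2 + c^2) * (b^2 + e^2))"
    using real_sqrt_le_mono by blast
  thus ?thesis by (simp add: real_sqrt_mult)
qed

lemma brack_bound:
  "2 * Re (cnj (l/2) * cnj s) - 2 * d * Re (cnj (l/2) * s)
     \<le> sqrt (((1-d) * Re l)^2 + ((1+d) * Im l)^2) * cmod s"
proof -
  have "2 * Re (cnj (l/2) * cnj s) - 2 * d * Re (cnj (l/2) * s)
      = ((1-d) * Re l) * Re s + ((1+d) * Im l) * (- Im s)"
    by (simp add: field_simps)
  also have "\<dots> \<le> sqrt (((1-d) * Re l)^2 + ((1+d) * Im l)^2) * sqrt ((Re s)^2 + (- Im s)^2)"
    by (rule real_CS2)
  also have "sqrt ((Re s)^2 + (- Im s)^2) = cmod s" by (simp add: cmod_def)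
  finally show ?thesis .
qed

lemma key:
  fixes A E :: "'a::complex_inner" and d k :: real
  assumes V: "isolin V" and d: "0 \<le> d" "d \<le> 1" and k: "0 < k"
    and R: "sqrt (((1-d) * Re l)^2 + ((1+d) * Im l)^2) \<le> 1 - d^2 - k"
    and ineq: "(1 - d^2) * (norm A)^2 \<le> 2 * Re (cinner A (V B)) - 2 * d * Re (cinner (V A) B)"
    and B: "B = scaleC (l/2) A + E"
  shows "k * norm A \<le> 4 * norm E"
proof -
  define s where "s = cinner (V A) A"
  have s': "cinner A (V A) = cnj s" unfolding s_def by (rule cinner_commute)
  have cs: "cmod s \<le> (norm A)^2" unfolding s_def using CS[of "V A" A] V
    by (simp add: isolin_norm power2_eq_square)
  have e1: "cinner A (V B) = cnj (l/2) * cnj s + cinner A (V E)"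
    unfolding B using V by (simp add: isolin_add isolin_scaleC cinner_simps s')
  have e2: "cinner (V A) B = cnj (l/2) * s + cinner (V A) E"
    unfolding B by (simp add: cinner_simps s_def)
  have t1: "Re (cinner A (V E)) \<le> norm A * norm E"
    using Re_CS[of A "V E"] V by (simp add: isolin_norm)
  have t2: "- Re (cinner (V A) E) \<le> norm A * norm E"
  proof -
    have "- Re (cinner (V A) E) \<le> cmod (cinner (V A) E)"
      using abs_Re_le_cmod[of "cinner (V A) E"] by linarith
    also have "\<dots> \<le> norm A * norm E" using CS[of "V A" E] V by (simp add: isolin_norm)
    finally show ?thesis .
  qed
  have br: "2 * Re (cnj (l/2) * cnj s) - 2 * d * Re (cnj (l/2) * s) \<le> (1 - d^2 - k) * (norm A)^2"
  proof -
    have "2 * Re (cnj (l/2) * cnj s) - 2 * d * Re (cnj (l/2) * s)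
       \<le> sqrt (((1-d) * Re l)^2 + ((1+d) * Im l)^2) * cmod s" by (rule brack_bound)
    also have "\<dots> \<le> (1 - d^2 - k) * (norm A)^2"
    proof -
      have "0 \<le> sqrt (((1-d) * Re l)^2 + ((1+d) * Im l)^2)" by simp
      hence "0 \<le> 1 - d^2 - k" using R by linarith
      thus ?thesis using R cs by (intro mult_mono) auto
    qed
    finally show ?thesis .
  qed
  have nE: "0 \<le> norm A * norm E" by simp
  have "(1 - d^2) * (norm A)^2 \<le> (1 - d^2 - k) * (norm A)^2 + 2 * (norm A * norm E) + 2 * d * (norm A * norm E)"
  proof -
    have r1: "Re (cinner A (V B)) = Re (cnj (l/2) * cnj s) + Re (cinner A (V E))" by (simp add: e1)
    have r2: "Re (cinner (V A) B) = Re (cnj (l/2) * s) + Re (cinner (V A) E)" by (simp add: e2)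
    have t3: "d * (- Re (cinner (V A) E)) \<le> d * (norm A * norm E)"
      using t2 d by (intro mult_left_mono) auto
    show ?thesis using ineq br t1 t3 unfolding r1 r2 by (simp add: algebra_simps)
  qed
  also have "\<dots> \<le> (1 - d^2 - k) * (norm A)^2 + 4 * (norm A * norm E)"
  proof -
    have "2 * d * (norm A * norm E) \<le> 2 * (norm A * norm E)" using d nE
      by (simp add: mult_left_le_one_le)
    thus ?thesis by linarith
  qed
  finally have "k * (norm A * norm A) \<le> (4 * norm E) * norm A"
    by (simp add: algebra_simps power2_eq_square)
  thus ?thesis
    by (cases "norm A = 0") (auto simp: mult_le_cancel_right)
qed

lemma lin3_cong: "a = a' \<Longrightarrow> b = b' \<Longrightarrow> c = c' \<Longrightarrow> lin3 x y z a b c = lin3 x y z a' b' c'"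
  by simp

definition Rf :: "real \<Rightarrow> complex \<Rightarrow> real" where
  "Rf d l = sqrt (((1-d) * Re l)^2 + ((1+d) * Im l)^2)"

lemma G_iff:
  assumes "0 < d" "d < 1"
  shows "l \<in> G d \<longleftrightarrow> Rf d l < 1 - d^2"
proof -
  have p1: "0 < (1+d)^2" "0 < (1-d)^2" using assms by auto
  have pos: "0 < 1 - d^2" using assms by (simp add: power2_eq_square) (smt (verit) mult_less_cancel_left1)
  have "l \<in> G d \<longleftrightarrow> (Re l)^2 / (1+d)^2 + (Im l)^2 / (1-d)^2 < 1" by (simp add: G_def)
  also have "\<dots> \<longleftrightarrow> (1-d)^2 * (Re l)^2 + (1+d)^2 * (Im l)^2 < (1+d)^2 * (1-d)^2"
    using p1 by (simp add: field_simps)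
  also have "\<dots> \<longleftrightarrow> ((1-d) * Re l)^2 + ((1+d) * Im l)^2 < (1 - d^2)^2"
    by (simp add: power_mult_distrib power2_eq_square algebra_simps)
  also have "\<dots> \<longleftrightarrow> Rf d l < 1 - d^2"
    unfolding Rf_def using pos
    by (metis abs_of_pos add_nonneg_nonneg real_sqrt_abs real_sqrt_less_iff zero_le_power2)
  finally show ?thesis .
qed

lemma Rf_cmod: "Rf d l = cmod (Complex ((1-d) * Re l) ((1+d) * Im l))"
  by (simp add: Rf_def cmod_def)

lemma Rf_aux:
  assumes "0 \<le> d"
  shows "((1-d) * Re h)^2 + ((1+d) * Im h)^2 \<le> ((1+d) * cmod h)^2"
proof -
  have "(1-d)^2 \<le> (1+d)^2" using assms by (simp add: power2_eq_square algebra_simps)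
  hence "(1-d)^2 * (Re h)^2 \<le> (1+d)^2 * (Re h)^2" by (simp add: mult_right_mono)
  moreover have "((1-d) * Re h)^2 + ((1+d) * Im h)^2 = (1-d)^2 * (Re h)^2 + (1+d)^2 * (Im h)^2"
    by (simp only: power_mult_distrib)
  moreover have "((1+d) * cmod h)^2 = (1+d)^2 * (Re h)^2 + (1+d)^2 * (Im h)^2"
    by (simp only: power_mult_distrib cmod_power2 distrib_left)
  ultimately show ?thesis by linarith
qed

lemma Rf_lip:
  assumes "0 \<le> d"
  shows "Rf d l \<le> Rf d z + (1+d) * cmod (l - z)"
proof -
  have "Complex ((1-d) * Re l) ((1+d) * Im l) = Complex ((1-d) * Re z) ((1+d) * Im z) + Complex ((1-d) * Re (l-z)) ((1+d) * Im (l-z))"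
    by (simp add: complex_eq_iff algebra_simps)
  hence "Rf d l \<le> Rf d z + Rf d (l - z)" unfolding Rf_cmod by (metis norm_triangle_ineq)
  also have "Rf d (l - z) \<le> (1+d) * cmod (l - z)"
  proof -
    have "((1-d) * Re (l-z))^2 + ((1+d) * Im (l-z))^2 \<le> ((1+d) * cmod (l-z))^2"
      by (rule Rf_aux[OF assms])
    hence "sqrt (((1-d) * Re (l-z))^2 + ((1+d) * Im (l-z))^2) \<le> sqrt (((1+d) * cmod (l-z))^2)"
      by (rule real_sqrt_le_mono)
    thus ?thesis using assms by (simp add: Rf_def)
  qed
  finally show ?thesis by simp
qed

lemma G_small:
  assumes "0 < d" "d < 1" "l \<in> G d"
  shows "cmod (l/2) < 1"
proof -
  have "Rf d l < 1 - d^2" using G_iff assms by blast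
  hence "(sqrt (((1-d) * Re l)^2 + ((1+d) * Im l)^2))^2 < (1 - d^2)^2"
    unfolding Rf_def by (intro power_strict_mono) auto
  hence "((1-d) * Re l)^2 + ((1+d) * Im l)^2 < (1 - d^2)^2"
    by simp
  hence a: "(1-d)^2 * ((Re l)^2 + (Im l)^2) < (1-d)^2 * (1+d)^2"
  proof -
    assume h: "((1-d) * Re l)^2 + ((1+d) * Im l)^2 < (1 - d^2)^2"
    have "(1-d)^2 * (Im l)^2 \<le> (1+d)^2 * (Im l)^2"
      using assms by (intro mult_right_mono) (auto simp: power2_eq_square algebra_simps)
    moreover have "(1 - d^2)^2 = (1-d)^2 * (1+d)^2" by (simp add: power2_eq_square algebra_simps)
    moreover have "((1-d) * Re l)^2 + ((1+d) * Im l)^2 = (1-d)^2 * (Re l)^2 + (1+d)^2 * (Im l)^2"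
      by (simp only: power_mult_distrib)
    moreover have "(1-d)^2 * ((Re l)^2 + (Im l)^2) = (1-d)^2 * (Re l)^2 + (1-d)^2 * (Im l)^2"
      by (simp only: distrib_left)
    ultimately show ?thesis using h by linarith
  qed
  have "(cmod l)^2 < (1+d)^2" using a assms by (simp add: cmod_power2)
  hence "cmod l < 1 + d" using assms by (simp add: power_less_imp_less_base)
  thus ?thesis using assms by (simp add: norm_divide)
qed


definition lin6 :: "'a::complex_inner \<Rightarrow> 'a \<Rightarrow> 'a \<Rightarrow> 'a \<Rightarrow> 'a \<Rightarrow> 'a \<Rightarrow> complex \<Rightarrow> complex \<Rightarrow> complex \<Rightarrow> complex \<Rightarrow> complex \<Rightarrow> complex \<Rightarrow> 'a" where
  "lin6 x1 x2 x3 x4 x5 x6 c1 c2 c3 c4 c5 c6 = scaleC c1 x1 + scaleC c2 x2 + scaleC c3 x3 + scaleC c4 x4 + scaleC c5 x5 + scaleC c6 x6"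

lemma lin6_add: "lin6 x1 x2 x3 x4 x5 x6 a1 a2 a3 a4 a5 a6 + lin6 x1 x2 x3 x4 x5 x6 b1 b2 b3 b4 b5 b6
   = lin6 x1 x2 x3 x4 x5 x6 (a1+b1) (a2+b2) (a3+b3) (a4+b4) (a5+b5) (a6+b6)"
  by (simp add: lin6_def sC_simps algebra_simps)
lemma lin6_diff: "lin6 x1 x2 x3 x4 x5 x6 a1 a2 a3 a4 a5 a6 - lin6 x1 x2 x3 x4 x5 x6 b1 b2 b3 b4 b5 b6
   = lin6 x1 x2 x3 x4 x5 x6 (a1-b1) (a2-b2) (a3-b3) (a4-b4) (a5-b5) (a6-b6)"
  by (simp add: lin6_def sC_simps algebra_simps)
lemma lin6_scale: "scaleC k (lin6 x1 x2 x3 x4 x5 x6 a1 a2 a3 a4 a5 a6)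
   = lin6 x1 x2 x3 x4 x5 x6 (k*a1) (k*a2) (k*a3) (k*a4) (k*a5) (k*a6)"
  by (simp add: lin6_def sC_simps)
lemma lin6_V: "isolin V \<Longrightarrow> V (lin6 x1 x2 x3 (V x1) (V x2) (V x3) a1 a2 a3 0 0 0)
   = lin6 x1 x2 x3 (V x1) (V x2) (V x3) 0 0 0 a1 a2 a3"
  by (simp add: lin6_def isolin_add isolin_scaleC sC_simps)
lemma lin6_units:
  "lin6 x1 x2 x3 x4 x5 x6 1 0 0 0 0 0 = x1"
  "lin6 x1 x2 x3 x4 x5 x6 0 1 0 0 0 0 = x2"
  "lin6 x1 x2 x3 x4 x5 x6 0 0 1 0 0 0 = x3"
  "lin6 x1 x2 x3 x4 x5 x6 0 1 (-1) 0 0 0 = x2 - x3"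
  "lin6 x1 x2 x3 x4 x5 x6 1 d 0 0 0 0 = x1 + scaleC d x2"
  by (simp_all add: lin6_def sC_simps)

lemma deriv_alg:
  fixes a Q v :: "'a::complex_inner"
  assumes V: "isolin V" and d: "d = y - z"
  shows "((a + scaleC d Q) - scaleC (y/2) (V (a + scaleC d Q))) - (a - scaleC (z/2) (V a))
     - scaleC d (v - scaleC (z/2) (V v) - scaleC (1/2) (V a))
     = scaleC d ((Q - v) - V (scaleC (y/2) (Q - v) + scaleC (d/2) v))"
proof -
  have "((lin6 a Q v (V a) (V Q) (V v) 1 d 0 0 0 0) - scaleC (y/2) (V (lin6 a Q v (V a) (V Q) (V v) 1 d 0 0 0 0)))
     - (lin6 a Q v (V a) (V Q) (V v) 1 0 0 0 0 0 - scaleC (z/2) (V (lin6 a Q v (V a) (V Q) (V v) 1 0 0 0 0 0)))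
     - scaleC d (lin6 a Q v (V a) (V Q) (V v) 0 0 1 0 0 0 - scaleC (z/2) (V (lin6 a Q v (V a) (V Q) (V v) 0 0 1 0 0 0))
        - scaleC (1/2) (V (lin6 a Q v (V a) (V Q) (V v) 1 0 0 0 0 0)))
     = scaleC d (lin6 a Q v (V a) (V Q) (V v) 0 1 (-1) 0 0 0 - V (scaleC (y/2) (lin6 a Q v (V a) (V Q) (V v) 0 1 (-1) 0 0 0)
        + scaleC (d/2) (lin6 a Q v (V a) (V Q) (V v) 0 0 1 0 0 0)))"
    by (simp add: lin6_V[OF V] lin6_scale lin6_add lin6_diff d field_simps)
  thus ?thesis by (simp only: lin6_units cvs.scale_zero_left add_0_right)
qed
theorem proposition2p8:
  fixes \<delta> :: real and f :: "complex \<Rightarrow> complex"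
    and U :: "'m::{complex_inner, complete_space} \<Rightarrow> 'm"
    and u :: "complex \<Rightarrow> 'm"
  assumes "0 < \<delta>" and "\<delta> < 1"
    and "unitary_op U"
    and "\<forall>l\<in>G \<delta>. \<forall>m\<in>G \<delta>.
           1 - cnj (f m) * f l
             = cinner (u l) (u m) - cinner (lamU \<delta> U l (u l)) (lamU \<delta> U m (u m))"
  shows "holomorphic_vec u (G \<delta>)"
proof -
  define V where "V = inv U"
  have V: "isolin V" using assms(3) unitary_isolin V_def by simp
  define w where "w = (\<lambda>l. inv (\<lambda>y. y - scaleC (l/2) (V y)) (u l))"
  have hu: "u l = w l - scaleC (l/2) (V (w l))" if l: "l \<in> G \<delta>" for l
  proof -
    have "bij (\<lambda>y. y - scaleC (l/2) (V y))" using L_bij[OF V G_small[OF assms(1,2) l]] .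
    hence "(\<lambda>y. y - scaleC (l/2) (V y)) (inv (\<lambda>y. y - scaleC (l/2) (V y)) (u l)) = u l"
      by (rule surj_f_inv_f[OF bij_is_surj])
    thus ?thesis unfolding w_def by simp
  qed
  have hT: "lamU \<delta> U l (u l) = scaleC (complex_of_real \<delta>) (V (w l)) - scaleC (l/2) (w l)" for l
    by (simp add: lamU_def Let_def w_def V_def)
  have H: "1 - cnj (f m) * f l = cinner (w l - scaleC (l/2) (V (w l))) (w m - scaleC (m/2) (V (w m)))
     - cinner (scaleC (complex_of_real \<delta>) (V (w l)) - scaleC (l/2) (w l)) (scaleC (complex_of_real \<delta>) (V (w m)) - scaleC (m/2) (w m))"
    if l: "l \<in> G \<delta>" and m: "m \<in> G \<delta>" for l m
  proof -
    have "1 - cnj (f m) * f l = cinner (u l) (u m) - cinner (lamU \<delta> U l (u l)) (lamU \<delta> U m (u m))"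
      using assms(4) l m by blast
    hence "1 - cnj (f m) * f l = cinner (u l) (u m) - cinner (scaleC (complex_of_real \<delta>) (V (w l)) - scaleC (l/2) (w l)) (scaleC (complex_of_real \<delta>) (V (w m)) - scaleC (m/2) (w m))"
      by (simp only: hT)
    thus ?thesis by (simp only: hu[OF l] hu[OF m])
  qed
  have keyG: "k * norm (lin3 (w l1) (w l2) (w l3) c1 c2 c3) \<le> 4 * norm E"
    if G1: "l1 \<in> G \<delta>" and G2: "l2 \<in> G \<delta>" and G3: "l3 \<in> G \<delta>" and c: "c1 + c2 + c3 = 0"
      and k: "0 < k" and R: "Rf \<delta> l1 \<le> 1 - \<delta>^2 - k"
      and B: "lin3 (w l1) (w l2) (w l3) (c1*(l1/2)) (c2*(l2/2)) (c3*(l3/2))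
              = scaleC (l1/2) (lin3 (w l1) (w l2) (w l3) c1 c2 c3) + E"
    for l1 l2 l3 c1 c2 c3 E k
  proof (rule key[OF V _ _ k _ _ B])
    show "0 \<le> \<delta>" "\<delta> \<le> 1" using assms(1,2) by auto
    show "sqrt (((1-\<delta>) * Re l1)^2 + ((1+\<delta>) * Im l1)^2) \<le> 1 - \<delta>^2 - k" using R by (simp add: Rf_def)
    show "(1 - \<delta>^2) * (norm (lin3 (w l1) (w l2) (w l3) c1 c2 c3))^2
      \<le> 2 * Re (cinner (lin3 (w l1) (w l2) (w l3) c1 c2 c3) (V (lin3 (w l1) (w l2) (w l3) (c1*(l1/2)) (c2*(l2/2)) (c3*(l3/2)))))
       - 2 * \<delta> * Re (cinner (V (lin3 (w l1) (w l2) (w l3) c1 c2 c3)) (lin3 (w l1) (w l2) (w l3) (c1*(l1/2)) (c2*(l2/2)) (c3*(l3/2))))"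
      by (rule gramw[OF V H[OF G1 G1] H[OF G1 G2] H[OF G1 G3] H[OF G2 G1] H[OF G2 G2] H[OF G2 G3]
            H[OF G3 G1] H[OF G3 G2] H[OF G3 G3] c]) (use assms(1) in simp)
  qed
  show ?thesis unfolding holomorphic_vec_def
  proof
    fix z assume zG: "z \<in> G \<delta>"
    define k where "k = (1 - \<delta>^2 - Rf \<delta> z) / 2"
    have k: "0 < k" using G_iff[OF assms(1,2)] zG by (simp add: k_def)
    define \<rho> where "\<rho> = k / 2"
    have \<rho>: "0 < \<rho>" using k by (simp add: \<rho>_def)
    have Rl: "Rf \<delta> l \<le> 1 - \<delta>^2 - k" if "cmod (l - z) \<le> \<rho>" for l
    proof -
      have "(1+\<delta>) * cmod (l - z) \<le> 2 * \<rho>"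
        using that assms(2) \<rho> by (intro mult_mono) auto
      moreover have "Rf \<delta> l \<le> Rf \<delta> z + (1 + \<delta>) * cmod (l - z)" using Rf_lip[of \<delta> l z] assms(1) by simp
      ultimately have "Rf \<delta> l \<le> Rf \<delta> z + 2 * ((1 - \<delta>\<^sup>2 - Rf \<delta> z) / 2 / 2)"
        unfolding k_def \<rho>_def by linarith
      thus ?thesis unfolding k_def by (simp add: field_simps)
    qed
    have inG: "l \<in> G \<delta>" if "cmod (l - z) \<le> \<rho>" for l
      using Rl[OF that] k G_iff[OF assms(1,2)] by force
    have step1: "k * norm (w l - w z) \<le> 2 * cmod (l - z) * norm (w z)" if lz: "cmod (l - z) \<le> \<rho>" for l
    proof -
      have "k * norm (lin3 (w l) (w z) (w z) 1 (-1) 0) \<le> 4 * norm (lin3 (w l) (w z) (w z) 0 ((l-z)/2) 0)"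
      proof (rule keyG[OF inG[OF lz] zG zG _ k Rl[OF lz]])
        show "1 + -1 + (0::complex) = 0" by simp
        show "lin3 (w l) (w z) (w z) (1*(l/2)) ((-1)*(z/2)) (0*(z/2))
           = scaleC (l/2) (lin3 (w l) (w z) (w z) 1 (-1) 0) + lin3 (w l) (w z) (w z) 0 ((l-z)/2) 0"
          unfolding lin3_scale lin3_add by (rule lin3_cong) (simp_all add: field_simps)
      qed
      moreover have "lin3 (w l) (w z) (w z) 1 (-1) 0 = w l - w z" by (simp add: lin3_def sC_simps)
      moreover have "lin3 (w l) (w z) (w z) 0 ((l-z)/2) 0 = scaleC ((l-z)/2) (w z)" by (simp add: lin3_def sC_simps)
      ultimately show ?thesis by (simp add: norm_scaleC norm_divide mult_ac)
    qed
    define q where "q = (\<lambda>y. scaleC (1/(y - z)) (w y - w z))"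
    have qb: "norm (q m) \<le> 2 * norm (w z) / k" if "cmod (m - z) \<le> \<rho>" "m \<noteq> z" for m
    proof -
      have "k * norm (w m - w z) \<le> 2 * cmod (m - z) * norm (w z)" by (rule step1[OF that(1)])
      hence "norm (w m - w z) / cmod (m - z) \<le> 2 * norm (w z) / k"
        using k that(2) by (simp add: field_simps)
      thus ?thesis by (simp add: q_def norm_scaleC norm_divide norm_inverse divide_inverse mult.commute)
    qed
    have qlin: "q l = lin3 (w l) (w m) (w z) (1/(l-z)) 0 (-(1/(l-z)))"
       "q m = lin3 (w l) (w m) (w z) 0 (1/(m-z)) (-(1/(m-z)))" for l m
      by (simp_all add: q_def lin3_def sC_simps)
    have step2: "k * norm (q l - q m) \<le> 2 * cmod (l - m) * norm (q m)"
      if lz: "cmod (l - z) \<le> \<rho>" "l \<noteq> z" and mz: "cmod (m - z) \<le> \<rho>" "m \<noteq> z" for l m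
    proof -
      have lz': "l - z \<noteq> 0" and mz': "m - z \<noteq> 0" using lz mz by auto
      have "k * norm (lin3 (w l) (w m) (w z) (1/(l-z)) (-(1/(m-z))) (-(1/(l-z)) + 1/(m-z)))
         \<le> 4 * norm (lin3 (w l) (w m) (w z) 0 ((l-m)/2 * (1/(m-z))) ((l-m)/2 * (-(1/(m-z)))))"
      proof (rule keyG[OF inG[OF lz(1)] inG[OF mz(1)] zG _ k Rl[OF lz(1)]])
        show "1/(l-z) + -(1/(m-z)) + (-(1/(l-z)) + 1/(m-z)) = 0" by simp
        show "lin3 (w l) (w m) (w z) (1/(l-z)*(l/2)) (-(1/(m-z))*(m/2)) ((-(1/(l-z)) + 1/(m-z))*(z/2))
           = scaleC (l/2) (lin3 (w l) (w m) (w z) (1/(l-z)) (-(1/(m-z))) (-(1/(l-z)) + 1/(m-z)))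
             + lin3 (w l) (w m) (w z) 0 ((l-m)/2 * (1/(m-z))) ((l-m)/2 * (-(1/(m-z))))"
        proof -
          define a where "a = 1/(l-z)"
          define b where "b = 1/(m-z)"
          have ha: "a * (l - z) = 1" using lz' by (simp add: a_def)
          have hb: "b * (m - z) = 1" using mz' by (simp add: b_def)
          show ?thesis unfolding lin3_scale lin3_add a_def[symmetric] b_def[symmetric]
          proof (intro lin3_cong)
            show "a * (l / 2) = l / 2 * a + 0" by simp
            show "- b * (m / 2) = l / 2 * - b + (l - m) / 2 * b" by (simp add: algebra_simps)
            have "(- a + b) * (z / 2) - (l / 2 * (- a + b) + (l - m) / 2 * - b) = (a * (l - z) - b * (m - z)) / 2"
              by (simp add: field_simps)
            also have "\<dots> = 0" using ha hb by simp
            finally show "(- a + b) * (z / 2) = l / 2 * (- a + b) + (l - m) / 2 * - b" by simp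
          qed
        qed
      qed
      moreover have "lin3 (w l) (w m) (w z) (1/(l-z)) (-(1/(m-z))) (-(1/(l-z)) + 1/(m-z)) = q l - q m"
        unfolding qlin(1)[of l m] qlin(2)[of m l] lin3_diff by (intro lin3_cong) simp_all
      moreover have "lin3 (w l) (w m) (w z) 0 ((l-m)/2 * (1/(m-z))) ((l-m)/2 * (-(1/(m-z)))) = scaleC ((l-m)/2) (q m)"
        unfolding qlin(2)[of m l] lin3_scale by simp
      ultimately show ?thesis by (simp add: norm_scaleC norm_divide mult_ac)
    qed
    define Lc where "Lc = 4 * norm (w z) / k^2"
    have Lc: "0 \<le> Lc" by (simp add: Lc_def)
    have lip: "norm (q l - q m) \<le> Lc * cmod (l - m)"
      if "cmod (l - z) \<le> \<rho>" "l \<noteq> z" "cmod (m - z) \<le> \<rho>" "m \<noteq> z" for l m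
    proof -
      have "k * norm (q l - q m) \<le> 2 * cmod (l - m) * norm (q m)" by (rule step2[OF that])
      also have "\<dots> \<le> 2 * cmod (l - m) * (2 * norm (w z) / k)"
        using qb[OF that(3,4)] by (intro mult_left_mono) auto
      finally have "k * norm (q l - q m) \<le> 4 * norm (w z) / k * cmod (l - m)" by (simp add: mult_ac)
      hence "norm (q l - q m) \<le> 4 * norm (w z) / k * cmod (l - m) / k" using k by (simp add: field_simps)
      thus ?thesis using k by (simp add: Lc_def power2_eq_square field_simps)
    qed
    define X where "X = ball z \<rho> - {z}"
    have ucont: "uniformly_continuous_on X q"
      unfolding uniformly_continuous_on_def
    proof (intro allI impI)
      fix e :: real assume e: "0 < e"
      show "\<exists>d>0. \<forall>x\<in>X. \<forall>x'\<in>X. dist x' x < d \<longrightarrow> dist (q x') (q x) < e"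
      proof (intro exI conjI ballI impI)
        show "0 < e / (Lc + 1)" using e Lc by simp
        fix x x' assume x: "x \<in> X" and x': "x' \<in> X" and dx: "dist x' x < e / (Lc + 1)"
        have h1: "cmod (x' - z) \<le> \<rho>" "x' \<noteq> z" "cmod (x - z) \<le> \<rho>" "x \<noteq> z"
          using x x' by (auto simp: X_def dist_norm norm_minus_commute)
        have "dist (q x') (q x) \<le> Lc * cmod (x' - x)"
          using lip[OF h1] by (simp add: dist_norm)
        also have "\<dots> \<le> Lc * (e / (Lc + 1))" using dx Lc by (intro mult_left_mono) (auto simp: dist_norm)
        also have "\<dots> < e" using e Lc by (simp add: field_simps)
        finally show "dist (q x') (q x) < e" .
      qed
    qed
    have zcl: "z \<in> closure X"
      unfolding X_def using islimpt_in_closure[of z "ball z \<rho>"] islimpt_ball[of z z \<rho>] \<rho> by simp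
    obtain v0 where v0w: "(q \<longlongrightarrow> v0) (at z within X)"
      using uniformly_continuous_on_extension_at_closure[OF ucont zcl] by blast
    have "at z within X = at z within ball z \<rho>" unfolding X_def at_within_def by simp
    hence v0: "(q \<longlongrightarrow> v0) (at z)" using v0w tendsto_within_open[of z "ball z \<rho>" q v0] \<rho> by simp
    define v' where "v' = v0 - scaleC (z/2) (V v0) - scaleC (1/2) (V (w z))"
    show "\<exists>v. (u has_derivative (\<lambda>h. scaleC h v)) (at z)"
    proof (intro exI)
      show "(u has_derivative (\<lambda>h. scaleC h v')) (at z)"
        unfolding has_derivative_iff_norm
      proof (intro conjI)
        show "bounded_linear (\<lambda>h. scaleC h v')"
        proof (rule bounded_linear_intro[where K="norm v'"])
          fix x y :: complex show "scaleC (x + y) v' = scaleC x v' + scaleC y v'" by (rule scaleC_add_left)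
        next
          fix r :: real and x :: complex
          have "scaleC (r *\<^sub>R x) v' = scaleC (complex_of_real r) (scaleC x v')"
            by (simp add: scaleR_conv_of_real scaleC_scaleC)
          thus "scaleC (r *\<^sub>R x) v' = r *\<^sub>R scaleC x v'" by (simp only: scaleC_of_real)
        next
          fix x :: complex show "norm (scaleC x v') \<le> norm x * norm v'" by (simp add: norm_scaleC)
        qed
        define g where "g = (\<lambda>y. 2 * norm (q y - v0) + cmod (y - z) * norm v0)"
        show "((\<lambda>y. norm (u y - u z - scaleC (y - z) v') / norm (y - z)) \<longlongrightarrow> 0) (at z)"
        proof (rule Lim_null_comparison)
          show "(g \<longlongrightarrow> 0) (at z)"
          proof -
            have "((\<lambda>y. norm (q y - v0)) \<longlongrightarrow> 0) (at z)"
              using v0 by (intro tendsto_norm_zero) (simp add: LIM_zero)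
            moreover have "((\<lambda>y. cmod (y - z)) \<longlongrightarrow> 0) (at z)"
              by (intro tendsto_norm_zero LIM_zero tendsto_ident_at)
            ultimately have "((\<lambda>y. 2 * norm (q y - v0) + cmod (y - z) * norm v0) \<longlongrightarrow> 2 * 0 + 0 * norm v0) (at z)"
              by (intro tendsto_intros) auto
            thus ?thesis by (simp add: g_def)
          qed
          show "\<forall>\<^sub>F y in at z. norm (norm (u y - u z - scaleC (y - z) v') / norm (y - z)) \<le> g y"
          proof -
          have "\<forall>y\<in>UNIV. y \<noteq> z \<and> dist y z < \<rho> \<longrightarrow> norm (norm (u y - u z - scaleC (y - z) v') / norm (y - z)) \<le> g y"
          proof (intro ballI impI)
            fix y :: complex assume y: "y \<noteq> z \<and> dist y z < \<rho>"
            have yz: "cmod (y - z) \<le> \<rho>" "y \<noteq> z" using y by (auto simp: dist_norm)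
            have yG: "y \<in> G \<delta>" by (rule inG[OF yz(1)])
            have wy: "w y = w z + scaleC (y - z) (q y)"
              using yz(2) by (simp add: q_def sC_simps)
            have eq: "u y - u z - scaleC (y - z) v' =
                scaleC (y - z) ((q y - v0) - V (scaleC (y/2) (q y - v0) + scaleC ((y - z)/2) v0))"
              unfolding hu[OF yG] hu[OF zG] wy v'_def
              by (rule deriv_alg[OF V refl])
            have "norm ((q y - v0) - V (scaleC (y/2) (q y - v0) + scaleC ((y - z)/2) v0))
                 \<le> norm (q y - v0) + (cmod (y/2) * norm (q y - v0) + cmod ((y - z)/2) * norm v0)"
            proof -
              have "norm (V (scaleC (y/2) (q y - v0) + scaleC ((y - z)/2) v0))
                  = norm (scaleC (y/2) (q y - v0) + scaleC ((y - z)/2) v0)" by (rule isolin_norm[OF V])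
              also have "\<dots> \<le> cmod (y/2) * norm (q y - v0) + cmod ((y - z)/2) * norm v0"
                using norm_triangle_ineq[of "scaleC (y/2) (q y - v0)" "scaleC ((y - z)/2) v0"]
                by (simp add: norm_scaleC)
              finally show ?thesis using norm_triangle_ineq4[of "q y - v0" "V (scaleC (y/2) (q y - v0) + scaleC ((y - z)/2) v0)"]
                by linarith
            qed
            also have "\<dots> \<le> g y"
            proof -
              have "cmod (y/2) * norm (q y - v0) \<le> 1 * norm (q y - v0)"
                using G_small[OF assms(1,2) yG] by (intro mult_right_mono) auto
              moreover have "cmod ((y - z)/2) * norm v0 \<le> cmod (y - z) * norm v0"
                by (intro mult_right_mono) (auto simp: norm_divide)
              ultimately show ?thesis unfolding g_def by linarith
            qed
            finally have "norm ((q y - v0) - V (scaleC (y/2) (q y - v0) + scaleC ((y - z)/2) v0)) \<le> g y" .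
            moreover have "norm (norm (u y - u z - scaleC (y - z) v') / norm (y - z))
               = norm ((q y - v0) - V (scaleC (y/2) (q y - v0) + scaleC ((y - z)/2) v0))"
              using yz(2) unfolding eq by (simp add: norm_scaleC)
            ultimately show "norm (norm (u y - u z - scaleC (y - z) v') / norm (y - z)) \<le> g y" by simp
          qed
          thus ?thesis unfolding eventually_at using \<rho> by blast
          qed
        qed
      qed
    qed
  qed
qed
end
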